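(* For all integers $m,r,n\ge 0$ and all real $x\neq 0$, $$H_{m+r,n}(x)=m!\sum_{k=0}^{m}\frac{(-1)^k}{k!}\,\frac{H_{m-k,n}(x)}{(m-k)!}\,\frac{d^k}{dx^k}\!\left(x^{-n}H_{r,n}(x)\right).$$
   Context: For integers $m,n\ge 0$, the two-index Hermite polynomial is $H_{m,n}(x)=\left(-\frac{d}{dx}+2x\right)^m(x^n)$, i.e. the operator $f\mapsto -f'+2xf$ applied $m$ times to $x^n$. *)

theory Defs
  imports "HOL-Analysis.Analysis" "HOL-Computational_Algebra.Polynomial"
begin

definition herm_op :: "real poly \<Rightarrow> real poly" where
  "herm_op p = - pderiv p + [:0, 2:] * p"

definition H2 :: "nat \<Rightarrow> nat \<Rightarrow> real poly" where
  "H2 m n = (herm_op ^^ m) (monom 1 n)"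

end

theory Submission
  imports Defs
begin

lemma pascal_sum:
  fixes c :: "nat \<Rightarrow> real"
  shows "(\<Sum>k\<le>Suc m. real (Suc m choose k) * c k) =
         (\<Sum>k\<le>m. real (m choose k) * c k) + (\<Sum>k\<le>m. real (m choose k) * c (Suc k))"
proof -
  have "(\<Sum>k\<le>Suc m. real (Suc m choose k) * c k) =
        c 0 + (\<Sum>k\<le>m. real (Suc m choose Suc k) * c (Suc k))"
    by (subst sum.atMost_Suc_shift) simp
  also have "\<dots> = c 0 + (\<Sum>k\<le>m. real (m choose Suc k) * c (Suc k))
                  + (\<Sum>k\<le>m. real (m choose k) * c (Suc k))"
    by (simp add: sum.distrib algebra_simps)
  also have "c 0 + (\<Sum>k\<le>m. real (m choose Suc k) * c (Suc k))
             = (\<Sum>k\<le>Suc m. real (m choose k) * c k)"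
    by (subst sum.atMost_Suc_shift) simp
  also have "\<dots> = (\<Sum>k\<le>m. real (m choose k) * c k)"
    by simp
  finally show ?thesis .
qed

lemma deriv_closed_form:
  fixes Q :: "real poly"
  shows "\<exists>q N. \<forall>y. y \<noteq> 0 \<longrightarrow> (deriv ^^ k) (\<lambda>y. poly Q y / y ^ n) y = poly q y / y ^ N"
proof (induction k)
  case 0
  then show ?case by auto
next
  case (Suc k)
  then obtain q N where h: "\<And>y. y \<noteq> 0 \<Longrightarrow> (deriv ^^ k) (\<lambda>y. poly Q y / y ^ n) y = poly q y / y ^ N"
    by blast
  define q' where "q' = pderiv q * monom 1 N - smult (real N) (q * monom 1 (N - 1))"
  have "(deriv ^^ Suc k) (\<lambda>y. poly Q y / y ^ n) y = poly q' y / y ^ (N + N)" if y: "y \<noteq> 0" for y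
  proof -
    have d: "((\<lambda>y. poly q y / y ^ N) has_real_derivative
       (poly (pderiv q) y * y ^ N - poly q y * (real N * y ^ (N - 1))) / (y ^ N * y ^ N)) (at y)"
      using y by (auto intro!: derivative_eq_intros)
    have d2: "((deriv ^^ k) (\<lambda>y. poly Q y / y ^ n) has_real_derivative
       (poly (pderiv q) y * y ^ N - poly q y * (real N * y ^ (N - 1))) / (y ^ N * y ^ N)) (at y)"
      by (rule has_field_derivative_transform_within_open[OF d, of "-{0}"]) (use y h in auto)
    have "(deriv ^^ Suc k) (\<lambda>y. poly Q y / y ^ n) y = 
       (poly (pderiv q) y * y ^ N - poly q y * (real N * y ^ (N - 1))) / (y ^ N * y ^ N)"
      using DERIV_imp_deriv[OF d2] by simp
    also have "\<dots> = poly q' y / y ^ (N + N)"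
      by (simp add: q'_def poly_monom power_add[symmetric] algebra_simps)
    finally show ?thesis .
  qed
  then show ?case by blast
qed

lemma G_deriv:
  fixes Q :: "real poly"
  assumes y: "y \<noteq> 0"
  shows "((deriv ^^ k) (\<lambda>y. poly Q y / y ^ n) has_real_derivative
           (deriv ^^ Suc k) (\<lambda>y. poly Q y / y ^ n) y) (at y)"
proof -
  obtain q N where h: "\<And>y. y \<noteq> 0 \<Longrightarrow> (deriv ^^ k) (\<lambda>y. poly Q y / y ^ n) y = poly q y / y ^ N"
    using deriv_closed_form[of k Q n] by blast
  have d: "((\<lambda>y. poly q y / y ^ N) has_real_derivative
       (poly (pderiv q) y * y ^ N - poly q y * (real N * y ^ (N - 1))) / (y ^ N * y ^ N)) (at y)"
    using y by (auto intro!: derivative_eq_intros)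
  have d2: "((deriv ^^ k) (\<lambda>y. poly Q y / y ^ n) has_real_derivative
       (poly (pderiv q) y * y ^ N - poly q y * (real N * y ^ (N - 1))) / (y ^ N * y ^ N)) (at y)"
    by (rule has_field_derivative_transform_within_open[OF d, of "-{0}"]) (use y h in auto)
  then have "(deriv ^^ k) (\<lambda>y. poly Q y / y ^ n) differentiable (at y)"
    using real_differentiable_def by blast
  then show ?thesis
    using DERIV_deriv_iff_real_differentiable by fastforce
qed

lemma H2_Suc: "H2 (Suc j) n = herm_op (H2 j n)"
  by (simp add: H2_def)

lemma poly_herm_op: "poly (herm_op p) y = - poly (pderiv p) y + 2 * y * poly p y"
  by (simp add: herm_op_def)

lemma main_lemma:
  fixes y :: real
  assumes y: "y \<noteq> 0"
  shows "poly (H2 (m + r) n) y = (\<Sum>k\<le>m. real (m choose k) * ((-1) ^ k *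
     (poly (H2 (m - k) n) y * (deriv ^^ k) (\<lambda>y. poly (H2 r n) y / y ^ n) y)))"
  using y
proof (induction m arbitrary: y)
  case 0
  then show ?case by (simp add: H2_def poly_monom)
next
  case (Suc m)
  define G where "G = (\<lambda>k. (deriv ^^ k) (\<lambda>y. poly (H2 r n) y / y ^ n))"
  define P where "P = (\<lambda>j. H2 j n)"
  define F where "F = (\<lambda>y. \<Sum>k\<le>m. real (m choose k) * ((-1) ^ k * (poly (P (m - k)) y * G k y)))"
  define F' where "F' = (\<Sum>k\<le>m. real (m choose k) * ((-1) ^ k *
      (poly (pderiv (P (m - k))) y * G k y + poly (P (m - k)) y * G (Suc k) y)))"
  have IH: "\<And>z. z \<in> -{0} \<Longrightarrow> F z = poly (H2 (m + r) n) z"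
    using Suc.IH by (simp add: F_def G_def P_def)
  have dF: "(F has_real_derivative F') (at y)"
    unfolding F_def F'_def
    by (intro derivative_eq_intros DERIV_sum poly_DERIV G_deriv[of y, unfolded G_def[symmetric]] Suc.prems[unfolded G_def[symmetric]])
       (use G_deriv[OF Suc.prems] in \<open>auto simp: G_def\<close>)
  have dH: "(poly (H2 (m + r) n) has_real_derivative F') (at y)"
    by (rule has_field_derivative_transform_within_open[OF dF, of "-{0}"]) (use Suc.prems IH in auto)
  have pd: "poly (pderiv (H2 (m + r) n)) y = F'"
    using DERIV_unique[OF dH poly_DERIV] by simp
  have "poly (H2 (Suc m + r) n) y = - F' + 2 * y * F y"
    using pd IH[of y] Suc.prems by (simp add: H2_Suc poly_herm_op)
  also have "\<dots> = (\<Sum>k\<le>m. real (m choose k) * ((-1) ^ k * (poly (P (Suc m - k)) y * G k y)))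
      + (\<Sum>k\<le>m. real (m choose k) * ((-1) ^ Suc k * (poly (P (Suc m - Suc k)) y * G (Suc k) y)))"
  proof -
    have "\<And>k. k \<le> m \<Longrightarrow> poly (P (Suc m - k)) y = - poly (pderiv (P (m - k))) y + 2 * y * poly (P (m - k)) y"
      by (simp add: P_def Suc_diff_le H2_Suc poly_herm_op)
    note e = this
    have "- F' + 2 * y * F y = (\<Sum>k\<le>m. - (real (m choose k) * ((-1) ^ k *
      (poly (pderiv (P (m - k))) y * G k y + poly (P (m - k)) y * G (Suc k) y)))
       + 2 * y * (real (m choose k) * ((-1) ^ k * (poly (P (m - k)) y * G k y))))"
      unfolding F'_def F_def by (simp add: sum.distrib sum_negf sum_distrib_left sum_subtractf)
    also have "\<dots> = (\<Sum>k\<le>m. real (m choose k) * ((-1) ^ k * (poly (P (Suc m - k)) y * G k y))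
      + real (m choose k) * ((-1) ^ Suc k * (poly (P (Suc m - Suc k)) y * G (Suc k) y)))"
      by (rule sum.cong) (auto simp: e algebra_simps)
    finally show ?thesis by (simp add: sum.distrib sum_negf sum_subtractf)
  qed
  also have "\<dots> = (\<Sum>k\<le>Suc m. real (Suc m choose k) * ((-1) ^ k * (poly (P (Suc m - k)) y * G k y)))"
    by (rule pascal_sum[symmetric])
  finally show ?case by (simp add: P_def G_def)
qed

theorem mainTheorem16:
  fixes m r n :: nat and x :: real
  assumes "x \<noteq> 0"
  shows "poly (H2 (m + r) n) x =
    fact m * (\<Sum>k\<le>m. ((-1) ^ k / fact k) * (poly (H2 (m - k) n) x / fact (m - k))
      * (deriv ^^ k) (\<lambda>y. y powi (- int n) * poly (H2 r n) y) x)"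
proof -
  have g: "(\<lambda>y. y powi (- int n) * poly (H2 r n) y) = (\<lambda>y::real. poly (H2 r n) y / y ^ n)"
    by (rule ext) (simp add: power_int_minus divide_inverse mult.commute)
  show ?thesis
    unfolding g main_lemma[OF assms] sum_distrib_left
  proof (rule sum.cong[OF refl])
    fix k assume "k \<in> {..m}"
    then have k: "k \<le> m" by simp
    show "real (m choose k) * ((-1) ^ k * (poly (H2 (m - k) n) x * (deriv ^^ k) (\<lambda>y. poly (H2 r n) y / y ^ n) x)) =
      fact m * ((-1) ^ k / fact k * (poly (H2 (m - k) n) x / fact (m - k)) * (deriv ^^ k) (\<lambda>y. poly (H2 r n) y / y ^ n) x)"
      by (simp add: binomial_fact[OF k] field_simps)
  qed
qed

end
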